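(* Let $a,b>0$, let $\chi_a,\chi_b$ be continuous kernels with $\operatorname{supp}\chi_a\subseteq[e^{-a},e^{a}]$ and $\operatorname{supp}\chi_b\subseteq[e^{-b},e^{b}]$, and let $\alpha\in\mathbb{R}$. Define $\chi:\mathbb{R}^+\to\mathbb{R}$ by $$\chi(u):=(1-\alpha)\,\chi_a(2ue^{-a-1})+\alpha\,\chi_b(2ue^{b}),\qquad u\in\mathbb{R}^+.$$ Then $\chi$ is a kernel with $\chi(1)=0$, and for every bounded $f:\mathbb{R}^+\to\mathbb{R}$ and every point $t\in\mathbb{R}^+$ of non-removable jump discontinuity of $f$, $$\lim_{w\to\infty}(S_w^\chi f)(t)=\alpha f(t+0)+(1-\alpha)f(t-0).$$
   Context: Let $\mathbb{R}^+=(0,\infty)$. For $\chi:\mathbb{R}^+\to\mathbb{R}$ and $\nu\ge 0$ set $M_\nu(\chi):=\sup_{u>0}\sum_{k\in\mathbb{Z}}|\chi(e^{-k}u)|\,|k-\log u|^\nu$ (with $|k-\log u|^0:=1$). A kernel is a function $\chi:\mathbb{R}^+\to\mathbb{R}$ such that (K1) $\sum_{k\in\mathbb{Z}}\chi(e^{-k}u)=1$ for every $u\in\mathbb{R}^+$, and (K2) $M_0(\chi)<\infty$ and $M_\nu(\chi)<\infty$ for some $\nu>0$. For a bounded $f:\mathbb{R}^+\to\mathbb{R}$, $w>0$ and $t\in\mathbb{R}^+$, the exponential sampling series is $(S_w^\chi f)(t)=\sum_{k\in\mathbb{Z}}\chi(e^{-k}t^w)\,f(e^{k/w})$. $t$ is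 a non-removable jump discontinuity of $f$ if $f(t+0)=\lim_{p\to0^+}f(t+p)$ and $f(t-0)=\lim_{p\to0^+}f(t-p)$ exist, are finite, and $f(t+0)\ne f(t-0)$. *)

theory Defs
  imports "HOL-Analysis.Analysis"
begin

definition moment_weight :: "real \<Rightarrow> int \<Rightarrow> real \<Rightarrow> real" where
  "moment_weight \<nu> k u = (if \<nu> = 0 then 1 else \<bar>real_of_int k - ln u\<bar> powr \<nu>)"

definition moment_finite :: "(real \<Rightarrow> real) \<Rightarrow> real \<Rightarrow> bool" where
  "moment_finite K \<nu> \<longleftrightarrow>
     (\<exists>C. \<forall>u>0. (\<lambda>k::int. \<bar>K (exp (- real_of_int k) * u)\<bar> * moment_weight \<nu> k u) summable_on UNIV
            \<and> (\<Sum>\<^sub>\<infinity>k::int. \<bar>K (exp (- real_of_int k) * u)\<bar> * moment_weight \<nu> k u) \<le> C)"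

definition kernel :: "(real \<Rightarrow> real) \<Rightarrow> bool" where
  "kernel K \<longleftrightarrow>
     (\<forall>u>0. ((\<lambda>k::int. K (exp (- real_of_int k) * u)) has_sum 1) UNIV)
     \<and> moment_finite K 0 \<and> (\<exists>\<nu>>0. moment_finite K \<nu>)"

definition exp_sampling :: "(real \<Rightarrow> real) \<Rightarrow> real \<Rightarrow> (real \<Rightarrow> real) \<Rightarrow> real \<Rightarrow> real" where
  "exp_sampling K w f t =
     (\<Sum>\<^sub>\<infinity>k::int. K (exp (- real_of_int k) * t powr w) * f (exp (real_of_int k / w)))"

end

theory Submission
  imports Defs
begin

lemma summ_bound:
  fixes g h :: "int \<Rightarrow> real"
  assumes "(\<lambda>k. \<bar>g k\<bar>) summable_on A" and "\<And>k. \<bar>h k\<bar> \<le> M"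
  shows "(\<lambda>k. g k * h k) summable_on A"
proof -
  have M: "M \<ge> 0" using assms(2)[of 0] by linarith
  have "(\<lambda>k. M * \<bar>g k\<bar>) summable_on A" by (rule summable_on_cmult_right[OF assms(1)])
  hence "(\<lambda>k. norm (M * \<bar>g k\<bar>)) summable_on A"
    by (rule summable_on_iff_abs_summable_on_real[THEN iffD1])
  hence "(\<lambda>k. norm (g k * h k)) summable_on A"
  proof (rule Infinite_Sum.abs_summable_on_comparison_test)
    fix k
    have "\<bar>g k\<bar> * \<bar>h k\<bar> \<le> \<bar>g k\<bar> * M" by (rule mult_left_mono[OF assms(2)]) simp
    thus "norm (g k * h k) \<le> norm (M * \<bar>g k\<bar>)" using M by (simp add: abs_mult abs_of_nonneg mult.commute)
  qed
  thus ?thesis by (rule summable_on_iff_abs_summable_on_real[THEN iffD2])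
qed

lemma part_limit:
  fixes G f :: "real \<Rightarrow> real" and c t L C B :: real
  assumes hs: "\<And>u. u>0 \<Longrightarrow> ((\<lambda>k::int. G (exp (- real_of_int k) * u)) has_sum 1) UNIV"
    and sm: "\<And>u. u>0 \<Longrightarrow> (\<lambda>k::int. \<bar>G (exp (- real_of_int k) * u)\<bar>) summable_on UNIV"
    and bd: "\<And>u. u>0 \<Longrightarrow> (\<Sum>\<^sub>\<infinity>k::int. \<bar>G (exp (- real_of_int k) * u)\<bar>) \<le> C"
    and c: "c > 0" and t: "t > 0"
    and fB: "\<And>x. x>0 \<Longrightarrow> \<bar>f x\<bar> \<le> B"
    and ev: "\<And>\<epsilon>. \<epsilon>>0 \<Longrightarrow> eventually (\<lambda>w. \<forall>k::int. G (exp (- real_of_int k) * (c * t powr w)) \<noteq> 0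
               \<longrightarrow> \<bar>f (exp (real_of_int k / w)) - L\<bar> \<le> \<epsilon>) at_top"
  shows "((\<lambda>w. \<Sum>\<^sub>\<infinity>k::int. G (exp (- real_of_int k) * (c * t powr w)) * f (exp (real_of_int k / w))) \<longlongrightarrow> L) at_top"
proof (rule tendstoI)
  fix e :: real assume e: "e > 0"
  define \<epsilon> where "\<epsilon> = e / (2 * (\<bar>C\<bar> + 1))"
  have \<epsilon>: "\<epsilon> > 0" using e by (simp add: \<epsilon>_def)
  have "\<epsilon> * (\<bar>C\<bar> + 1) = e / 2"
    unfolding \<epsilon>_def by (simp add: field_simps add_pos_nonneg)
  hence \<epsilon>C: "\<epsilon> * (\<bar>C\<bar> + 1) < e" using e by simp
  show "eventually (\<lambda>w. dist (\<Sum>\<^sub>\<infinity>k::int. G (exp (- real_of_int k) * (c * t powr w)) * f (exp (real_of_int k / w))) L < e) at_top"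
    using ev[OF \<epsilon>]
  proof eventually_elim
    case (elim w)
    define u where "u = c * t powr w"
    have u: "u > 0" using c t by (simp add: u_def)
    define g where "g = (\<lambda>k::int. G (exp (- real_of_int k) * u))"
    define h where "h = (\<lambda>k::int. f (exp (real_of_int k / w)))"
    have g1: "(g has_sum 1) UNIV" unfolding g_def by (rule hs[OF u])
    have gs: "g summable_on UNIV" using g1 has_sum_imp_summable by blast
    have ga: "(\<lambda>k. \<bar>g k\<bar>) summable_on UNIV" using sm[OF u] by (simp add: g_def)
    have gC: "(\<Sum>\<^sub>\<infinity>k. \<bar>g k\<bar>) \<le> C" using bd[OF u] by (simp add: g_def)
    have hB: "\<bar>h k - L\<bar> \<le> B + \<bar>L\<bar>" for k using fB[of "exp (real_of_int k / w)"] by (simp add: h_def)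
    have ds: "(\<lambda>k. g k * (h k - L)) summable_on UNIV" by (rule summ_bound[OF ga hB])
    have dsa: "(\<lambda>k. \<bar>g k * (h k - L)\<bar>) summable_on UNIV"
      using summable_on_iff_abs_summable_on_real[of "\<lambda>k. g k * (h k - L)" UNIV] ds by simp
    have eq: "(\<lambda>k. g k * h k) = (\<lambda>k. g k * (h k - L) + L * g k)"
      by (auto simp: algebra_simps)
    have "(\<Sum>\<^sub>\<infinity>k. g k * h k) = (\<Sum>\<^sub>\<infinity>k. g k * (h k - L)) + L * (\<Sum>\<^sub>\<infinity>k. g k)"
      unfolding eq by (subst infsum_add[OF ds summable_on_cmult_right[OF gs]])
        (simp add: infsum_cmult_right[OF gs])
    also have "(\<Sum>\<^sub>\<infinity>k. g k) = 1" using g1 infsumI by blast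
    finally have S: "(\<Sum>\<^sub>\<infinity>k. g k * h k) - L = (\<Sum>\<^sub>\<infinity>k. g k * (h k - L))" by simp
    have "\<bar>\<Sum>\<^sub>\<infinity>k. g k * (h k - L)\<bar> \<le> (\<Sum>\<^sub>\<infinity>k. \<bar>g k * (h k - L)\<bar>)"
      using norm_infsum_bound[of "\<lambda>k. g k * (h k - L)" UNIV] dsa by simp
    also have "\<dots> \<le> (\<Sum>\<^sub>\<infinity>k. \<epsilon> * \<bar>g k\<bar>)"
    proof (rule infsum_mono[OF dsa summable_on_cmult_right[OF ga]])
      fix k
      show "\<bar>g k * (h k - L)\<bar> \<le> \<epsilon> * \<bar>g k\<bar>"
      proof (cases "g k = 0")
        case False
        hence "\<bar>h k - L\<bar> \<le> \<epsilon>" using elim by (simp add: g_def h_def u_def)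
        hence "\<bar>g k\<bar> * \<bar>h k - L\<bar> \<le> \<bar>g k\<bar> * \<epsilon>" by (rule mult_left_mono) simp
        thus ?thesis by (simp add: abs_mult mult.commute)
      qed simp
    qed
    also have "\<dots> = \<epsilon> * (\<Sum>\<^sub>\<infinity>k. \<bar>g k\<bar>)" by (simp add: infsum_cmult_right[OF ga])
    also have "\<dots> \<le> \<epsilon> * (\<bar>C\<bar> + 1)" using gC \<epsilon> by (intro mult_left_mono) auto
    finally have "\<bar>(\<Sum>\<^sub>\<infinity>k. g k * h k) - L\<bar> < e" using \<epsilon>C S by linarith
    thus ?case by (simp add: dist_real_def g_def h_def u_def)
  qed
qed


lemma ev_left:
  fixes f G :: "real \<Rightarrow> real" and a t fm \<epsilon> :: real
  assumes a: "a>0" and t: "t>0" and supp: "\<forall>u>0. G u \<noteq> 0 \<longrightarrow> u \<in> {exp (- a)..exp a}"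
    and lim: "(f \<longlongrightarrow> fm) (at_left t)" and \<epsilon>: "\<epsilon>>0"
  shows "eventually (\<lambda>w. \<forall>k::int. G (exp (- real_of_int k) * (2 * exp (- a - 1) * t powr w)) \<noteq> 0
               \<longrightarrow> \<bar>f (exp (real_of_int k / w)) - fm\<bar> \<le> \<epsilon>) at_top"
proof -
  have "eventually (\<lambda>x. dist (f x) fm < \<epsilon>) (at_left t)" using tendstoD[OF lim \<epsilon>] .
  then obtain b where b: "b<t" "\<And>y. y>b \<Longrightarrow> y<t \<Longrightarrow> dist (f y) fm < \<epsilon>"
    using eventually_at_left[of "t-1" t] by auto
  have "((\<lambda>w. (2*a+1)/w) \<longlongrightarrow> 0) at_top"
    by (intro tendsto_divide_0[OF tendsto_const] filterlim_at_top_imp_at_infinity filterlim_ident)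
  hence "((\<lambda>w. t * exp (- ((2*a+1)/w))) \<longlongrightarrow> t * exp (- 0)) at_top" by (intro tendsto_intros)
  hence lim2: "((\<lambda>w. t * exp (- ((2*a+1)/w))) \<longlongrightarrow> t) at_top" by simp
  have e1: "eventually (\<lambda>w. b < t * exp (- ((2*a+1)/w))) at_top" using order_tendstoD(1)[OF lim2 b(1)] .
  have e2: "eventually (\<lambda>w::real. w > 0) at_top" by simp
  show ?thesis using e1 e2
  proof eventually_elim
    case (elim w)
    show ?case
    proof (intro allI impI)
      fix k :: int
      assume nz: "G (exp (- real_of_int k) * (2 * exp (- a - 1) * t powr w)) \<noteq> 0"
      define E where "E = - real_of_int k + ln 2 + (- a - 1) + w * ln t"
      have "exp E = exp (- real_of_int k) * exp (ln 2) * exp (- a - 1) * exp (w * ln t)"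
        unfolding E_def by (simp only: exp_add)
      hence X: "exp (- real_of_int k) * (2 * exp (- a - 1) * t powr w) = exp E"
        using t by (simp add: powr_def mult_ac)
      have nz': "G (exp E) \<noteq> 0" using nz unfolding X .
      have "exp E \<in> {exp (- a)..exp a}" using supp[rule_format, OF exp_gt_zero[of E] nz'] .
      hence E1: "-a \<le> E" and E2: "E \<le> a" by auto
      have l2: "ln 2 < (1::real)" "0 < ln (2::real)" using ln_2_less_1 by auto
      have "real_of_int k < w * ln t" using E1 l2 unfolding E_def by linarith
      hence "real_of_int k / w < ln t" using elim(2) by (simp add: pos_divide_less_eq mult.commute)
      hence up: "exp (real_of_int k / w) < t" using t by (metis exp_less_cancel_iff exp_ln)
      have "w * ln t - (2*a+1) < real_of_int k" using E2 l2 unfolding E_def by linarith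
      hence "(w * ln t - (2*a+1)) / w < real_of_int k / w" using elim(2) by (rule divide_strict_right_mono)
      moreover have "(w * ln t - (2*a+1)) / w = ln t + (- ((2*a+1)/w))" using elim(2) by (simp add: field_simps)
      ultimately have lt: "ln t + (- ((2*a+1)/w)) < real_of_int k / w" by linarith
      have "exp (ln t + (- ((2*a+1)/w))) < exp (real_of_int k / w)" using lt by (simp only: exp_less_cancel_iff)
      moreover have "exp (ln t + (- ((2*a+1)/w))) = t * exp (- ((2*a+1)/w))" using t by (simp only: exp_add exp_ln)
      ultimately have "t * exp (- ((2*a+1)/w)) < exp (real_of_int k / w)" by linarith
      hence lo: "b < exp (real_of_int k / w)" using elim(1) by linarith
      show "\<bar>f (exp (real_of_int k / w)) - fm\<bar> \<le> \<epsilon>" using b(2)[OF lo up] by (simp add: dist_real_def)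
    qed
  qed
qed

lemma ev_right:
  fixes f G :: "real \<Rightarrow> real" and b t fp \<epsilon> :: real
  assumes b: "b>0" and t: "t>0" and supp: "\<forall>u>0. G u \<noteq> 0 \<longrightarrow> u \<in> {exp (- b)..exp b}"
    and lim: "(f \<longlongrightarrow> fp) (at_right t)" and \<epsilon>: "\<epsilon>>0"
  shows "eventually (\<lambda>w. \<forall>k::int. G (exp (- real_of_int k) * (2 * exp b * t powr w)) \<noteq> 0
               \<longrightarrow> \<bar>f (exp (real_of_int k / w)) - fp\<bar> \<le> \<epsilon>) at_top"
proof -
  have "eventually (\<lambda>x. dist (f x) fp < \<epsilon>) (at_right t)" using tendstoD[OF lim \<epsilon>] .
  then obtain d where d: "d>t" "\<And>y. y>t \<Longrightarrow> y<d \<Longrightarrow> dist (f y) fp < \<epsilon>"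
    using eventually_at_right[of t "t+1"] by auto
  have "((\<lambda>w. (2*b+1)/w) \<longlongrightarrow> 0) at_top"
    by (intro tendsto_divide_0[OF tendsto_const] filterlim_at_top_imp_at_infinity filterlim_ident)
  hence "((\<lambda>w. t * exp ((2*b+1)/w)) \<longlongrightarrow> t * exp 0) at_top" by (intro tendsto_intros)
  hence lim2: "((\<lambda>w. t * exp ((2*b+1)/w)) \<longlongrightarrow> t) at_top" by simp
  have e1: "eventually (\<lambda>w. t * exp ((2*b+1)/w) < d) at_top" using order_tendstoD(2)[OF lim2 d(1)] .
  have e2: "eventually (\<lambda>w::real. w > 0) at_top" by simp
  show ?thesis using e1 e2
  proof eventually_elim
    case (elim w)
    show ?case
    proof (intro allI impI)
      fix k :: int
      assume nz: "G (exp (- real_of_int k) * (2 * exp b * t powr w)) \<noteq> 0"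
      define E where "E = - real_of_int k + ln 2 + b + w * ln t"
      have "exp E = exp (- real_of_int k) * exp (ln 2) * exp b * exp (w * ln t)"
        unfolding E_def by (simp only: exp_add)
      hence X: "exp (- real_of_int k) * (2 * exp b * t powr w) = exp E"
        using t by (simp add: powr_def mult_ac)
      have nz': "G (exp E) \<noteq> 0" using nz unfolding X .
      have "exp E \<in> {exp (- b)..exp b}" using supp[rule_format, OF exp_gt_zero[of E] nz'] .
      hence E1: "-b \<le> E" and E2: "E \<le> b" by auto
      have l2: "ln 2 < (1::real)" "0 < ln (2::real)" using ln_2_less_1 by auto
      have "w * ln t < real_of_int k" using E2 l2 unfolding E_def by linarith
      hence "ln t < real_of_int k / w" using elim(2) by (simp add: pos_less_divide_eq mult.commute)
      hence lo: "t < exp (real_of_int k / w)" using t by (metis exp_less_cancel_iff exp_ln)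
      have "real_of_int k < w * ln t + (2*b+1)" using E1 l2 unfolding E_def by linarith
      hence "real_of_int k / w < (w * ln t + (2*b+1)) / w" using elim(2) by (rule divide_strict_right_mono)
      moreover have "(w * ln t + (2*b+1)) / w = ln t + (2*b+1)/w" using elim(2) by (simp add: field_simps)
      ultimately have "exp (real_of_int k / w) < exp (ln t + (2*b+1)/w)" by simp
      hence "exp (real_of_int k / w) < t * exp ((2*b+1)/w)" using t by (simp add: exp_add)
      hence up: "exp (real_of_int k / w) < d" using elim(1) by linarith
      show "\<bar>f (exp (real_of_int k / w)) - fp\<bar> \<le> \<epsilon>" using d(2)[OF lo up] by (simp add: dist_real_def)
    qed
  qed
qed


theorem theorem11:
  fixes a b \<alpha> :: real and Ka Kb K :: "real \<Rightarrow> real"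
  assumes "a > 0" and "b > 0"
    and "kernel Ka" and "kernel Kb"
    and "continuous_on {0<..} Ka" and "continuous_on {0<..} Kb"
    and "\<forall>u>0. Ka u \<noteq> 0 \<longrightarrow> u \<in> {exp (- a)..exp a}"
    and "\<forall>u>0. Kb u \<noteq> 0 \<longrightarrow> u \<in> {exp (- b)..exp b}"
    and "K = (\<lambda>u. (1 - \<alpha>) * Ka (2 * u * exp (- a - 1)) + \<alpha> * Kb (2 * u * exp b))"
  shows "kernel K \<and> K 1 = 0 \<and>
    (\<forall>(f :: real \<Rightarrow> real) t fp fm.
       (\<exists>B. \<forall>x>0. \<bar>f x\<bar> \<le> B) \<longrightarrow> t > 0 \<longrightarrow>
       (f \<longlongrightarrow> fp) (at_right t) \<longrightarrow> (f \<longlongrightarrow> fm) (at_left t) \<longrightarrow> fp \<noteq> fm \<longrightarrow>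
       ((\<lambda>w. exp_sampling K w f t) \<longlongrightarrow> \<alpha> * fp + (1 - \<alpha>) * fm) at_top)"
proof -
  note a = assms(1) and b = assms(2) and Kdef = assms(9)
  define ca where "ca = 2 * exp (- a - 1)"
  define cb where "cb = 2 * exp b"
  have ca: "ca > 0" and cb: "cb > 0" by (auto simp: ca_def cb_def)
  have KS: "K (exp (- real_of_int k) * u) =
      (1 - \<alpha>) * Ka (exp (- real_of_int k) * (ca * u)) + \<alpha> * Kb (exp (- real_of_int k) * (cb * u))"
    for k :: int and u by (simp add: Kdef ca_def cb_def mult_ac)
  have hsA: "\<And>u. u>0 \<Longrightarrow> ((\<lambda>k::int. Ka (exp (- real_of_int k) * u)) has_sum 1) UNIV"
    using assms(3) unfolding kernel_def by blast
  have hsB: "\<And>u. u>0 \<Longrightarrow> ((\<lambda>k::int. Kb (exp (- real_of_int k) * u)) has_sum 1) UNIV"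
    using assms(4) unfolding kernel_def by blast
  have mw0: "moment_weight 0 k u = 1" for k :: int and u by (simp add: moment_weight_def)
  have mfA: "moment_finite Ka 0" using assms(3) unfolding kernel_def by (elim conjE)
  then obtain Ca where A0: "\<forall>u>0. (\<lambda>k::int. \<bar>Ka (exp (- real_of_int k) * u)\<bar> * moment_weight 0 k u) summable_on UNIV
      \<and> (\<Sum>\<^sub>\<infinity>k::int. \<bar>Ka (exp (- real_of_int k) * u)\<bar> * moment_weight 0 k u) \<le> Ca"
    unfolding moment_finite_def by (elim exE)
  have mfB: "moment_finite Kb 0" using assms(4) unfolding kernel_def by (elim conjE)
  then obtain Cb where B0: "\<forall>u>0. (\<lambda>k::int. \<bar>Kb (exp (- real_of_int k) * u)\<bar> * moment_weight 0 k u) summable_on UNIV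
      \<and> (\<Sum>\<^sub>\<infinity>k::int. \<bar>Kb (exp (- real_of_int k) * u)\<bar> * moment_weight 0 k u) \<le> Cb"
    unfolding moment_finite_def by (elim exE)
  have smA: "(\<lambda>k::int. \<bar>Ka (exp (- real_of_int k) * u)\<bar>) summable_on UNIV"
   and bdA: "(\<Sum>\<^sub>\<infinity>k::int. \<bar>Ka (exp (- real_of_int k) * u)\<bar>) \<le> Ca" if "u > 0" for u
    using A0[rule_format, OF that] unfolding mw0 mult_1_right by auto
  have smB: "(\<lambda>k::int. \<bar>Kb (exp (- real_of_int k) * u)\<bar>) summable_on UNIV"
   and bdB: "(\<Sum>\<^sub>\<infinity>k::int. \<bar>Kb (exp (- real_of_int k) * u)\<bar>) \<le> Cb" if "u > 0" for u
    using B0[rule_format, OF that] unfolding mw0 mult_1_right by auto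

  have hsK: "((\<lambda>k::int. K (exp (- real_of_int k) * u)) has_sum 1) UNIV" if u: "u > 0" for u
  proof -
    have "((\<lambda>k::int. (1 - \<alpha>) * Ka (exp (- real_of_int k) * (ca * u)) + \<alpha> * Kb (exp (- real_of_int k) * (cb * u)))
       has_sum ((1 - \<alpha>) * 1 + \<alpha> * 1)) UNIV"
      using u ca cb by (intro has_sum_add has_sum_cmult_right hsA hsB) auto
    thus ?thesis by (simp add: KS)
  qed

  define C0 where "C0 = \<bar>1 - \<alpha>\<bar> * Ca + \<bar>\<alpha>\<bar> * Cb"
  have absK: "\<bar>K (exp (- real_of_int k) * u)\<bar> \<le>
      \<bar>1 - \<alpha>\<bar> * \<bar>Ka (exp (- real_of_int k) * (ca * u))\<bar> + \<bar>\<alpha>\<bar> * \<bar>Kb (exp (- real_of_int k) * (cb * u))\<bar>"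
    for k :: int and u unfolding KS abs_mult[symmetric] by (rule abs_triangle_ineq)
  have smK: "(\<lambda>k::int. \<bar>K (exp (- real_of_int k) * u)\<bar>) summable_on UNIV"
   and bdK: "(\<Sum>\<^sub>\<infinity>k::int. \<bar>K (exp (- real_of_int k) * u)\<bar>) \<le> C0" if u: "u > 0" for u
  proof -
    have s1: "(\<lambda>k::int. \<bar>1 - \<alpha>\<bar> * \<bar>Ka (exp (- real_of_int k) * (ca * u))\<bar>) summable_on UNIV"
      using u ca by (intro summable_on_cmult_right smA) auto
    have s2: "(\<lambda>k::int. \<bar>\<alpha>\<bar> * \<bar>Kb (exp (- real_of_int k) * (cb * u))\<bar>) summable_on UNIV"
      using u cb by (intro summable_on_cmult_right smB) auto
    note s12 = summable_on_add[OF s1 s2]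
    show smK: "(\<lambda>k::int. \<bar>K (exp (- real_of_int k) * u)\<bar>) summable_on UNIV"
      by (rule summable_on_comparison_test[OF s12]) (rule absK, rule abs_ge_zero)
    have "(\<Sum>\<^sub>\<infinity>k::int. \<bar>K (exp (- real_of_int k) * u)\<bar>) \<le>
        (\<Sum>\<^sub>\<infinity>k::int. \<bar>1 - \<alpha>\<bar> * \<bar>Ka (exp (- real_of_int k) * (ca * u))\<bar> + \<bar>\<alpha>\<bar> * \<bar>Kb (exp (- real_of_int k) * (cb * u))\<bar>)"
      by (rule infsum_mono[OF smK s12]) (rule absK)
    also have "\<dots> = \<bar>1 - \<alpha>\<bar> * (\<Sum>\<^sub>\<infinity>k::int. \<bar>Ka (exp (- real_of_int k) * (ca * u))\<bar>)
                  + \<bar>\<alpha>\<bar> * (\<Sum>\<^sub>\<infinity>k::int. \<bar>Kb (exp (- real_of_int k) * (cb * u))\<bar>)"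
      using u ca cb by (simp add: infsum_add[OF s1 s2] infsum_cmult_right smA smB)
    also have "\<dots> \<le> C0" unfolding C0_def
      using u ca cb bdA[of "ca * u"] bdB[of "cb * u"]
      by (intro add_mono mult_left_mono) auto
    finally show "(\<Sum>\<^sub>\<infinity>k::int. \<bar>K (exp (- real_of_int k) * u)\<bar>) \<le> C0" .
  qed

  define R where "R = 2*a + 2*b + 2"
  have R: "R \<ge> 0" using a b by (simp add: R_def)
  have suppK: "\<bar>ln x\<bar> \<le> R" if x: "x > 0" and nz: "K x \<noteq> 0" for x
  proof -
    have l2: "ln 2 < (1::real)" "0 < ln (2::real)" using ln_2_less_1 by auto
    have lnA: "ln (2 * x * exp (- a - 1)) = ln 2 + ln x + (- a - 1)" using x by (simp add: ln_mult)
    have lnB: "ln (2 * x * exp b) = ln 2 + ln x + b" using x by (simp add: ln_mult)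
    from nz have "Ka (2 * x * exp (- a - 1)) \<noteq> 0 \<or> Kb (2 * x * exp b) \<noteq> 0" by (auto simp: Kdef)
    thus ?thesis
    proof
      assume "Ka (2 * x * exp (- a - 1)) \<noteq> 0"
      note nzX = this
      have Xp: "2 * x * exp (- a - 1) > 0" using x by simp
      have "2 * x * exp (- a - 1) \<in> {exp (- a)..exp a}" by (rule assms(7)[rule_format, OF Xp nzX])
      hence h1: "exp (- a) \<le> 2 * x * exp (- a - 1)" and h2: "2 * x * exp (- a - 1) \<le> exp a" by auto
      have g1: "- a \<le> ln (2 * x * exp (- a - 1))" using ln_ge_iff[OF Xp] h1 by blast
      have "ln (2 * x * exp (- a - 1)) \<le> ln (exp a)" using ln_le_cancel_iff[OF Xp exp_gt_zero[of a]] h2 by blast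
      hence g2: "ln (2 * x * exp (- a - 1)) \<le> a" by simp
      have "-a \<le> ln 2 + ln x + (- a - 1) \<and> ln 2 + ln x + (- a - 1) \<le> a" using g1 g2 unfolding lnA by simp
      thus ?thesis using l2 a b unfolding R_def by linarith
    next
      assume "Kb (2 * x * exp b) \<noteq> 0"
      note nzX = this
      have Xp: "2 * x * exp b > 0" using x by simp
      have "2 * x * exp b \<in> {exp (- b)..exp b}" by (rule assms(8)[rule_format, OF Xp nzX])
      hence h1: "exp (- b) \<le> 2 * x * exp b" and h2: "2 * x * exp b \<le> exp b" by auto
      have g1: "- b \<le> ln (2 * x * exp b)" using ln_ge_iff[OF Xp] h1 by blast
      have "ln (2 * x * exp b) \<le> ln (exp b)" using ln_le_cancel_iff[OF Xp exp_gt_zero[of b]] h2 by blast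
      hence g2: "ln (2 * x * exp b) \<le> b" by simp
      have "-b \<le> ln 2 + ln x + b \<and> ln 2 + ln x + b \<le> b" using g1 g2 unfolding lnB by simp
      thus ?thesis using l2 a b unfolding R_def by linarith
    qed
  qed

  have mf0: "moment_finite K 0"
    unfolding moment_finite_def mw0 mult_1_right using smK bdK by blast
  have mf1: "moment_finite K 1"
    unfolding moment_finite_def
  proof (intro exI allI impI conjI)
    fix u :: real assume u: "u > 0"
    have le: "\<bar>K (exp (- real_of_int k) * u)\<bar> * moment_weight 1 k u \<le> R * \<bar>K (exp (- real_of_int k) * u)\<bar>"
      for k :: int
    proof (cases "K (exp (- real_of_int k) * u) = 0")
      case False
      have "\<bar>ln (exp (- real_of_int k) * u)\<bar> \<le> R" using suppK[OF _ False] u by simp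
      moreover have "ln (exp (- real_of_int k) * u) = - real_of_int k + ln u" using u by (simp add: ln_mult)
      ultimately have "\<bar>real_of_int k - ln u\<bar> \<le> R" by linarith
      hence "\<bar>real_of_int k - ln u\<bar> * \<bar>K (exp (- real_of_int k) * u)\<bar> \<le> R * \<bar>K (exp (- real_of_int k) * u)\<bar>"
        by (rule mult_right_mono) simp
      moreover have "moment_weight 1 k u = \<bar>real_of_int k - ln u\<bar>" by (simp add: moment_weight_def)
      ultimately show ?thesis by (simp only: mult.commute)
    qed (simp add: moment_weight_def)
    have nn: "0 \<le> \<bar>K (exp (- real_of_int k) * u)\<bar> * moment_weight 1 k u" for k :: int
      by (simp add: moment_weight_def)
    have sR: "(\<lambda>k::int. R * \<bar>K (exp (- real_of_int k) * u)\<bar>) summable_on UNIV"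
      by (intro summable_on_cmult_right smK u)
    show sm1: "(\<lambda>k::int. \<bar>K (exp (- real_of_int k) * u)\<bar> * moment_weight 1 k u) summable_on UNIV"
      by (rule summable_on_comparison_test[OF sR]) (use le nn in auto)
    have "(\<Sum>\<^sub>\<infinity>k::int. \<bar>K (exp (- real_of_int k) * u)\<bar> * moment_weight 1 k u)
        \<le> (\<Sum>\<^sub>\<infinity>k::int. R * \<bar>K (exp (- real_of_int k) * u)\<bar>)"
      by (rule infsum_mono[OF sm1 sR]) (rule le)
    also have "\<dots> = R * (\<Sum>\<^sub>\<infinity>k::int. \<bar>K (exp (- real_of_int k) * u)\<bar>)"
      by (simp add: infsum_cmult_right smK u)
    also have "\<dots> \<le> R * C0" using bdK[OF u] R by (rule mult_left_mono)
    finally show "(\<Sum>\<^sub>\<infinity>k::int. \<bar>K (exp (- real_of_int k) * u)\<bar> * moment_weight 1 k u) \<le> R * C0" .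
  qed
  have mfex: "\<exists>\<nu>>0. moment_finite K \<nu>" using mf1 by (intro exI[of _ "1::real"]) simp
  have kerK: "kernel K" unfolding kernel_def using mf0 mfex by (auto intro: hsK)

  have K1: "K 1 = 0"
  proof -
    have e2: "2 < exp (1::real)" using exp_less_cancel_iff[of "ln 2" 1] ln_2_less_1 by simp
    have "2 * exp (- a - 1) < exp 1 * exp (- a - 1)" by (rule mult_strict_right_mono[OF e2]) simp
    also have "\<dots> = exp (1 + (- a - 1))" by (rule exp_add[symmetric])
    also have "\<dots> = exp (- a)" by simp
    finally have "\<not> exp (- a) \<le> 2 * 1 * exp (- a - 1)" by simp
    hence "Ka (2 * 1 * exp (- a - 1)) = 0" using assms(7)[rule_format, of "2 * 1 * exp (- a - 1)"] by auto
    moreover have "\<not> 2 * 1 * exp b \<le> exp b" by simp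
    hence "Kb (2 * 1 * exp b) = 0" using assms(8)[rule_format, of "2 * 1 * exp b"] by auto
    ultimately show ?thesis by (simp add: Kdef)
  qed

  have lim: "((\<lambda>w. exp_sampling K w f t) \<longlongrightarrow> \<alpha> * fp + (1 - \<alpha>) * fm) at_top"
    if fB0: "\<exists>B. \<forall>x>0. \<bar>f x\<bar> \<le> B" and t: "t > 0"
      and lr: "(f \<longlongrightarrow> fp) (at_right t)" and ll: "(f \<longlongrightarrow> fm) (at_left t)" for f t fp fm
  proof -
    obtain B where fB: "\<And>x. x>0 \<Longrightarrow> \<bar>f x\<bar> \<le> B" using fB0 by auto
    define A where "A w = (\<Sum>\<^sub>\<infinity>k::int. Ka (exp (- real_of_int k) * (ca * t powr w)) * f (exp (real_of_int k / w)))" for w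
    define Bs where "Bs w = (\<Sum>\<^sub>\<infinity>k::int. Kb (exp (- real_of_int k) * (cb * t powr w)) * f (exp (real_of_int k / w)))" for w
    have eq: "exp_sampling K w f t = (1 - \<alpha>) * A w + \<alpha> * Bs w" for w
    proof -
      have fb: "\<bar>f (exp (real_of_int k / w))\<bar> \<le> B" for k :: int by (rule fB) simp
      have s1: "(\<lambda>k::int. Ka (exp (- real_of_int k) * (ca * t powr w)) * f (exp (real_of_int k / w))) summable_on UNIV"
        by (rule summ_bound[OF smA fb]) (use ca t in simp)
      have s2: "(\<lambda>k::int. Kb (exp (- real_of_int k) * (cb * t powr w)) * f (exp (real_of_int k / w))) summable_on UNIV"
        by (rule summ_bound[OF smB fb]) (use cb t in simp)
      have "exp_sampling K w f t = (\<Sum>\<^sub>\<infinity>k::int. (1 - \<alpha>) * (Ka (exp (- real_of_int k) * (ca * t powr w)) * f (exp (real_of_int k / w)))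
          + \<alpha> * (Kb (exp (- real_of_int k) * (cb * t powr w)) * f (exp (real_of_int k / w))))"
        unfolding exp_sampling_def KS by (simp only: distrib_right mult.assoc)
      also have "\<dots> = (1 - \<alpha>) * A w + \<alpha> * Bs w"
        unfolding A_def Bs_def
        by (subst infsum_add[OF summable_on_cmult_right[OF s1] summable_on_cmult_right[OF s2]])
           (simp add: infsum_cmult_right s1 s2)
      finally show ?thesis .
    qed
    have LA: "(A \<longlongrightarrow> fm) at_top" unfolding A_def
    proof (rule part_limit[OF hsA smA bdA ca t fB])
      fix \<epsilon> :: real assume "\<epsilon> > 0"
      from ev_left[OF a t assms(7) ll this] show
        "eventually (\<lambda>w. \<forall>k::int. Ka (exp (- real_of_int k) * (ca * t powr w)) \<noteq> 0
               \<longrightarrow> \<bar>f (exp (real_of_int k / w)) - fm\<bar> \<le> \<epsilon>) at_top" by (simp add: ca_def)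
    qed auto
    have LB: "(Bs \<longlongrightarrow> fp) at_top" unfolding Bs_def
    proof (rule part_limit[OF hsB smB bdB cb t fB])
      fix \<epsilon> :: real assume "\<epsilon> > 0"
      from ev_right[OF b t assms(8) lr this] show
        "eventually (\<lambda>w. \<forall>k::int. Kb (exp (- real_of_int k) * (cb * t powr w)) \<noteq> 0
               \<longrightarrow> \<bar>f (exp (real_of_int k / w)) - fp\<bar> \<le> \<epsilon>) at_top" by (simp add: cb_def)
    qed auto
    have "((\<lambda>w. (1 - \<alpha>) * A w + \<alpha> * Bs w) \<longlongrightarrow> (1 - \<alpha>) * fm + \<alpha> * fp) at_top"
      by (intro tendsto_add tendsto_mult_left LA LB)
    thus ?thesis unfolding eq by (simp add: add.commute)
  qed
  show ?thesis
  proof (intro conjI allI impI)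
    show "kernel K" by (rule kerK)
    show "K 1 = 0" by (rule K1)
  next
    fix f :: "real \<Rightarrow> real" and t fp fm :: real
    assume h1: "\<exists>B. \<forall>x>0. \<bar>f x\<bar> \<le> B" and h2: "t > 0"
      and h3: "(f \<longlongrightarrow> fp) (at_right t)" and h4: "(f \<longlongrightarrow> fm) (at_left t)"
    show "((\<lambda>w. exp_sampling K w f t) \<longlongrightarrow> \<alpha> * fp + (1 - \<alpha>) * fm) at_top"
      by (rule lim[OF h1 h2 h3 h4])
  qed
qed

end
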